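(* If the quadrilateral $Q$ in $K^2$ has no parallel sides and no parallel diagonals, then a pair of bisectors of $Q$ is $Q$-antipodal if and only if it is $Q$-orthogonal.
   Context: $K$ is a field of characteristic $\neq 2$. Every line $L$ in $K^2$ has an equation $tX-uY+v=0$ normalized so that $t=1$ if $u=0$ and $u=1$ if $u\neq 0$; coefficients denoted $t_L,u_L,v_L$. A quadrilateral $Q=ABA'B'$ consists of four distinct lines $A,B,A',B'$ (sides), not all through one point, with adjacent sides ($A,B$; $B,A'$; $A',B'$; $B',A$) not parallel; opposite sides may be parallel. Vertices: $A\cap B$, $B\cap A'$, $A'\cap B'$, $B'\cap A$ (two may coincide if three sides are concurrent). Diagonals: the lines through nonadjacent vertices. The centroid is the average of the four vertices. Let $\alpha=t_Au_Bu_{A'}u_{B'}-u_At_Bu_{A'}u_{B'}+u_Au_Bt_{A'}u_{B'}-u_Au_Bu_{A'}t_{B'}$, $\beta=t_Au_Bt_{A'}u_{B'}-u_At_Bu_{A'}t_{B'}$, $\gamma=t_At_Bt_{A'}u_{B'}-t_At_Bu_{A'}t_{B'}+t_Au_Bt_{A'}t_{B'}-u_At_Bt_{A'}t_{B'}$, and $\langle \mathbf v,\mathbf w\rangle_Q=\mathbf v^T\begin{pmatrix}\gamma&-\beta\\-\beta&\alpha\end{pmatrix}\mathbf w$. Lines $\ell_1,\ell_2$ are $Q$-orthogonal if $\langle (u_{\ell_1},t_{\ell_1}),(u_{\ell_2},t_{\ell_2})\rangle_Q=0$. A line $\ell$ crosses a pair $\{\ell_1,\ell_2\}$ if distinct from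 both and not parallel to both; $\mathrm{mid}_{\{\ell_1,\ell_2\}}(\ell)$ is the midpoint of the points where $\ell$ meets $\ell_1,\ell_2$ (the point at infinity of $\ell$ if one is at infinity). $\ell$ bisects $Q$ (is a bisector) if $\mathrm{mid}_{\mathsf P}(\ell)$ is the same for all pairs $\mathsf P$ among $\{A,A'\},\{B,B'\}$ that $\ell$ crosses; this common point is the midpoint of the bisector. A pair $\{\ell_1,\ell_2\}$ of bisectors (possibly $\ell_1=\ell_2$) is $Q$-antipodal if the midpoint of their midpoints is the centroid of $Q$. *)

theory Defs
  imports Main
begin

text \<open>A line is represented by its normalized coefficient triple (t,u,v), standing for the
equation t X - u Y + v = 0, normalized so that t = 1 if u = 0 and u = 1 if u is nonzero.
With this normalization every line has exactly one representing triple.\<close>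

type_synonym 'a line = "'a \<times> 'a \<times> 'a"

definition tL :: "'a line \<Rightarrow> 'a" where "tL L = fst L"
definition uL :: "'a line \<Rightarrow> 'a" where "uL L = fst (snd L)"
definition vL :: "'a line \<Rightarrow> 'a" where "vL L = snd (snd L)"

definition is_line :: "('a::field) line \<Rightarrow> bool" where
  "is_line L \<longleftrightarrow> (uL L = 0 \<and> tL L = 1) \<or> uL L = 1"

definition on_line :: "('a::field) \<times> 'a \<Rightarrow> 'a line \<Rightarrow> bool" where
  "on_line p L \<longleftrightarrow> tL L * fst p - uL L * snd p + vL L = 0"

definition parallel :: "('a::field) line \<Rightarrow> 'a line \<Rightarrow> bool" where
  "parallel L M \<longleftrightarrow> tL L = tL M \<and> uL L = uL M"

definition meet :: "('a::field) line \<Rightarrow> 'a line \<Rightarrow> 'a \<times> 'a" where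
  "meet L M = (THE p. on_line p L \<and> on_line p M)"

definition line_through :: "('a::field) \<times> 'a \<Rightarrow> 'a \<times> 'a \<Rightarrow> 'a line" where
  "line_through p q = (THE L. is_line L \<and> on_line p L \<and> on_line q L)"

definition midpt :: "('a::field) \<times> 'a \<Rightarrow> 'a \<times> 'a \<Rightarrow> 'a \<times> 'a" where
  "midpt p q = ((fst p + fst q) / 2, (snd p + snd q) / 2)"

definition is_quad :: "('a::field) line \<Rightarrow> 'a line \<Rightarrow> 'a line \<Rightarrow> 'a line \<Rightarrow> bool" where
  "is_quad A B A' B' \<longleftrightarrow>
     is_line A \<and> is_line B \<and> is_line A' \<and> is_line B' \<and>
     distinct [A, B, A', B'] \<and>
     \<not> (\<exists>p. on_line p A \<and> on_line p B \<and> on_line p A' \<and> on_line p B') \<and>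
     \<not> parallel A B \<and> \<not> parallel B A' \<and> \<not> parallel A' B' \<and> \<not> parallel B' A"

definition centroid :: "('a::field) line \<Rightarrow> 'a line \<Rightarrow> 'a line \<Rightarrow> 'a line \<Rightarrow> 'a \<times> 'a" where
  "centroid A B A' B' =
     (let P1 = meet A B; P2 = meet B A'; P3 = meet A' B'; P4 = meet B' A in
      ((fst P1 + fst P2 + fst P3 + fst P4) / 4, (snd P1 + snd P2 + snd P3 + snd P4) / 4))"

definition diag1 :: "('a::field) line \<Rightarrow> 'a line \<Rightarrow> 'a line \<Rightarrow> 'a line \<Rightarrow> 'a line" where
  "diag1 A B A' B' = line_through (meet A B) (meet A' B')"

definition diag2 :: "('a::field) line \<Rightarrow> 'a line \<Rightarrow> 'a line \<Rightarrow> 'a line \<Rightarrow> 'a line" where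
  "diag2 A B A' B' = line_through (meet B A') (meet B' A)"

definition qalpha :: "('a::field) line \<Rightarrow> 'a line \<Rightarrow> 'a line \<Rightarrow> 'a line \<Rightarrow> 'a" where
  "qalpha A B A' B' =
     tL A * uL B * uL A' * uL B' - uL A * tL B * uL A' * uL B'
     + uL A * uL B * tL A' * uL B' - uL A * uL B * uL A' * tL B'"

definition qbeta :: "('a::field) line \<Rightarrow> 'a line \<Rightarrow> 'a line \<Rightarrow> 'a line \<Rightarrow> 'a" where
  "qbeta A B A' B' = tL A * uL B * tL A' * uL B' - uL A * tL B * uL A' * tL B'"

definition qgamma :: "('a::field) line \<Rightarrow> 'a line \<Rightarrow> 'a line \<Rightarrow> 'a line \<Rightarrow> 'a" where
  "qgamma A B A' B' =
     tL A * tL B * tL A' * uL B' - tL A * tL B * uL A' * tL B'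
     + tL A * uL B * tL A' * tL B' - uL A * tL B * tL A' * tL B'"

definition qform :: "('a::field) line \<Rightarrow> 'a line \<Rightarrow> 'a line \<Rightarrow> 'a line \<Rightarrow> 'a \<times> 'a \<Rightarrow> 'a \<times> 'a \<Rightarrow> 'a" where
  "qform A B A' B' v w =
     qgamma A B A' B' * fst v * fst w - qbeta A B A' B' * fst v * snd w
     - qbeta A B A' B' * snd v * fst w + qalpha A B A' B' * snd v * snd w"

definition Q_orthogonal :: "('a::field) line \<Rightarrow> 'a line \<Rightarrow> 'a line \<Rightarrow> 'a line \<Rightarrow> 'a line \<Rightarrow> 'a line \<Rightarrow> bool" where
  "Q_orthogonal A B A' B' l1 l2 \<longleftrightarrow> qform A B A' B' (uL l1, tL l1) (uL l2, tL l2) = 0"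

text \<open>Points of the projective closure: affine points, and points at infinity
(indexed by the normalized direction (u,t) of the lines through them).\<close>
datatype 'a ppoint = Fin "'a \<times> 'a" | Infty "'a \<times> 'a"

definition crosses :: "('a::field) line \<Rightarrow> 'a line \<Rightarrow> 'a line \<Rightarrow> bool" where
  "crosses l l1 l2 \<longleftrightarrow> l \<noteq> l1 \<and> l \<noteq> l2 \<and> \<not> (parallel l l1 \<and> parallel l l2)"

definition midl :: "('a::field) line \<Rightarrow> 'a line \<Rightarrow> 'a line \<Rightarrow> 'a ppoint" where
  "midl l l1 l2 =
     (if parallel l l1 \<or> parallel l l2 then Infty (uL l, tL l)
      else Fin (midpt (meet l l1) (meet l l2)))"

definition bisects :: "('a::field) line \<Rightarrow> 'a line \<Rightarrow> 'a line \<Rightarrow> 'a line \<Rightarrow> 'a line \<Rightarrow> bool" where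
  "bisects A B A' B' l \<longleftrightarrow> is_line l \<and>
     (crosses l A A' \<and> crosses l B B' \<longrightarrow> midl l A A' = midl l B B')"

definition bisector_mid :: "('a::field) line \<Rightarrow> 'a line \<Rightarrow> 'a line \<Rightarrow> 'a line \<Rightarrow> 'a line \<Rightarrow> 'a ppoint" where
  "bisector_mid A B A' B' l = (if crosses l A A' then midl l A A' else midl l B B')"

text \<open>Q-antipodal pair of bisectors: the midpoint of their midpoints is the centroid
(which is an affine point, so both midpoints must be affine).\<close>
definition Q_antipodal :: "('a::field) line \<Rightarrow> 'a line \<Rightarrow> 'a line \<Rightarrow> 'a line \<Rightarrow> 'a line \<Rightarrow> 'a line \<Rightarrow> bool" where
  "Q_antipodal A B A' B' l1 l2 \<longleftrightarrow>
     bisects A B A' B' l1 \<and> bisects A B A' B' l2 \<and>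
     (crosses l1 A A' \<or> crosses l1 B B') \<and> (crosses l2 A A' \<or> crosses l2 B B') \<and>
     (\<exists>p1 p2. bisector_mid A B A' B' l1 = Fin p1 \<and> bisector_mid A B A' B' l2 = Fin p2 \<and>
        midpt p1 p2 = centroid A B A' B')"

end

theory Submission
  imports Defs
begin

definition EE :: "('a::field) line \<Rightarrow> 'a line \<Rightarrow> 'a" where
  "EE X Y = uL X * tL Y - tL X * uL Y"

definition qq :: "('a::field) line \<Rightarrow> 'a line \<Rightarrow> 'a line \<Rightarrow> 'a line \<Rightarrow> 'a \<Rightarrow> 'a \<Rightarrow> 'a" where
  "qq A B C E u t = qgamma A B C E * u * u - 2 * qbeta A B C E * u * t + qalpha A B C E * t * t"

definition rx0 :: "('a::field) line \<Rightarrow> 'a line \<Rightarrow> 'a line \<Rightarrow> 'a line \<Rightarrow> 'a" where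
  "rx0 A B C E = tL A*tL B*uL C*vL E - tL A*tL B*uL E*vL C - tL A*tL E*uL B*vL C + tL A*tL E*uL C*vL B
     + tL B*tL C*uL A*vL E - tL B*tL C*uL E*vL A + tL C*tL E*uL A*vL B - tL C*tL E*uL B*vL A"
definition rx1 :: "('a::field) line \<Rightarrow> 'a line \<Rightarrow> 'a line \<Rightarrow> 'a line \<Rightarrow> 'a" where
  "rx1 A B C E = - tL A*uL B*uL C*vL E + 2*tL A*uL B*uL E*vL C - tL A*uL C*uL E*vL B - 2*tL B*uL A*uL C*vL E
     + tL B*uL A*uL E*vL C + tL B*uL C*uL E*vL A - tL C*uL A*uL B*vL E - tL C*uL A*uL E*vL B
     + 2*tL C*uL B*uL E*vL A + tL E*uL A*uL B*vL C - 2*tL E*uL A*uL C*vL B + tL E*uL B*uL C*vL A"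
definition rx2 :: "('a::field) line \<Rightarrow> 'a line \<Rightarrow> 'a line \<Rightarrow> 'a line \<Rightarrow> 'a" where
  "rx2 A B C E = 2*uL A*uL B*uL C*vL E - 2*uL A*uL B*uL E*vL C + 2*uL A*uL C*uL E*vL B - 2*uL B*uL C*uL E*vL A"
definition ry0 :: "('a::field) line \<Rightarrow> 'a line \<Rightarrow> 'a line \<Rightarrow> 'a line \<Rightarrow> 'a" where
  "ry0 A B C E = 2*tL A*tL B*tL C*vL E - 2*tL A*tL B*tL E*vL C + 2*tL A*tL C*tL E*vL B - 2*tL B*tL C*tL E*vL A"
definition ry1 :: "('a::field) line \<Rightarrow> 'a line \<Rightarrow> 'a line \<Rightarrow> 'a line \<Rightarrow> 'a" where
  "ry1 A B C E = - tL A*tL B*uL C*vL E + tL A*tL B*uL E*vL C - 2*tL A*tL C*uL B*vL E - 2*tL A*tL C*uL E*vL B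
     + tL A*tL E*uL B*vL C - tL A*tL E*uL C*vL B - tL B*tL C*uL A*vL E + tL B*tL C*uL E*vL A
     + 2*tL B*tL E*uL A*vL C + 2*tL B*tL E*uL C*vL A - tL C*tL E*uL A*vL B + tL C*tL E*uL B*vL A"
definition ry2 :: "('a::field) line \<Rightarrow> 'a line \<Rightarrow> 'a line \<Rightarrow> 'a line \<Rightarrow> 'a" where
  "ry2 A B C E = tL A*uL B*uL C*vL E + tL A*uL C*uL E*vL B - tL B*uL A*uL E*vL C - tL B*uL C*uL E*vL A
     + tL C*uL A*uL B*vL E + tL C*uL A*uL E*vL B - tL E*uL A*uL B*vL C - tL E*uL B*uL C*vL A"

definition rx where "rx A B C E u t = rx0 A B C E * u * u + rx1 A B C E * u * t + rx2 A B C E * t * t"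
definition ry where "ry A B C E u t = ry0 A B C E * u * u + ry1 A B C E * u * t + ry2 A B C E * t * t"

definition NX :: "('a::field) line \<Rightarrow> 'a line \<Rightarrow> 'a" where
  "NX X Y = vL X * uL Y - uL X * vL Y"
definition NY :: "('a::field) line \<Rightarrow> 'a line \<Rightarrow> 'a" where
  "NY X Y = tL Y * vL X - tL X * vL Y"

lemma detQ: "qalpha A B C E * qgamma A B C E - qbeta A B C E * qbeta A B C E
   = - (EE A B * EE B C * EE C E * EE E A)"
  unfolding qalpha_def qbeta_def qgamma_def EE_def by algebra

lemma G4x: "qalpha A B C E * rx0 A B C E + qbeta A B C E * rx1 A B C E + qgamma A B C E * rx2 A B C E
  = - (NX A B * EE B C * EE C E * EE E A + NX B C * EE A B * EE C E * EE E A
     + NX C E * EE A B * EE B C * EE E A + NX E A * EE A B * EE B C * EE C E)"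
  unfolding qalpha_def qbeta_def qgamma_def EE_def NX_def rx0_def rx1_def rx2_def by algebra

lemma G4y: "qalpha A B C E * ry0 A B C E + qbeta A B C E * ry1 A B C E + qgamma A B C E * ry2 A B C E
  = - (NY A B * EE B C * EE C E * EE E A + NY B C * EE A B * EE C E * EE E A
     + NY C E * EE A B * EE B C * EE E A + NY E A * EE A B * EE B C * EE C E)"
  unfolding qalpha_def qbeta_def qgamma_def EE_def NY_def ry0_def ry1_def ry2_def by algebra

definition det3 :: "'a::field \<Rightarrow> 'a \<Rightarrow> 'a \<Rightarrow> 'a \<Rightarrow> 'a \<Rightarrow> 'a \<Rightarrow> 'a \<Rightarrow> 'a \<Rightarrow> 'a \<Rightarrow> 'a" where
  "det3 a0 a1 a2 b0 b1 b2 c0 c1 c2 = a0*(b1*c2-b2*c1) - a1*(b0*c2-b2*c0) + a2*(b0*c1-b1*c0)"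

definition TT where "TT A B C E = det3 (rx0 A B C E) (rx1 A B C E) (rx2 A B C E) (ry0 A B C E) (ry1 A B C E) (ry2 A B C E)
   (qgamma A B C E) (-2*qbeta A B C E) (qalpha A B C E)"

lemma Tfac: "TT A B C E =
  ((NX C E * EE A B - NX A B * EE C E) * (NY E A * EE B C - NY B C * EE E A)
   - (NY C E * EE A B - NY A B * EE C E) * (NX E A * EE B C - NX B C * EE E A))
  * (tL A * uL C - tL C * uL A) * (tL B * uL E - tL E * uL B)"
  unfolding TT_def det3_def qalpha_def qbeta_def qgamma_def EE_def NX_def NY_def
    rx0_def rx1_def rx2_def ry0_def ry1_def ry2_def by algebra

lemma L5: fixes al be ga r0 r1 r2 u1 t1 u2 t2 :: "'a::field"
  shows "(r0*u1*u1 + r1*u1*t1 + r2*t1*t1) * (ga*u2*u2 - 2*be*u2*t2 + al*t2*t2)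
    + (r0*u2*u2 + r1*u2*t2 + r2*t2*t2) * (ga*u1*u1 - 2*be*u1*t1 + al*t1*t1)
    - (2*r0*u1*u2 + r1*(u1*t2+t1*u2) + 2*r2*t1*t2) * (ga*u1*u2 - be*u1*t2 - be*t1*u2 + al*t1*t2)
    = (al*r0 + be*r1 + ga*r2) * (u1*t2 - t1*u2) * (u1*t2 - t1*u2)"
  by algebra

lemma L5b: fixes al be ga u1 t1 u2 t2 :: "'a::field"
  shows "(ga*u1*u1 - 2*be*u1*t1 + al*t1*t1) * (ga*u2*u2 - 2*be*u2*t2 + al*t2*t2)
    - (ga*u1*u2 - be*u1*t2 - be*t1*u2 + al*t1*t2) * (ga*u1*u2 - be*u1*t2 - be*t1*u2 + al*t1*t2)
    = (al*ga - be*be) * (u1*t2 - t1*u2) * (u1*t2 - t1*u2)"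
  by algebra

lemma L6: fixes al be ga g0 g1 g2 h0 h1 h2 u t :: "'a::field"
  assumes "al*g0 + be*g1 + ga*g2 = 0" "al*h0 + be*h1 + ga*h2 = 0"
  shows "(al*ga - be*be) * ((2*g0*u+g1*t)*(h1*u+2*h2*t) - (g1*u+2*g2*t)*(2*h0*u+h1*t))
     = det3 g0 g1 g2 h0 h1 h2 ga (-2*be) al * (ga*u*u - 2*be*u*t + al*t*t)"
  using assms unfolding det3_def by algebra

definition cP where "cP A B C E l = vL A * EE l B * EE l C * EE l E + vL C * EE l A * EE l B * EE l E
   - vL B * EE l A * EE l C * EE l E - vL E * EE l A * EE l B * EE l C"

lemma Bx: "(vL l * uL A - uL l * vL A) * EE l B * EE l C * EE l E + (vL l * uL C - uL l * vL C) * EE l A * EE l B * EE l E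
  - (vL l * uL B - uL l * vL B) * EE l A * EE l C * EE l E - (vL l * uL E - uL l * vL E) * EE l A * EE l B * EE l C
  = - uL l * (vL l * qq A B C E (uL l) (tL l) + cP A B C E l)"
  unfolding cP_def qalpha_def qbeta_def qgamma_def EE_def NX_def NY_def rx0_def rx1_def rx2_def ry0_def ry1_def ry2_def qq_def rx_def ry_def by algebra

lemma By: "(tL A * vL l - tL l * vL A) * EE l B * EE l C * EE l E + (tL C * vL l - tL l * vL C) * EE l A * EE l B * EE l E
  - (tL B * vL l - tL l * vL B) * EE l A * EE l C * EE l E - (tL E * vL l - tL l * vL E) * EE l A * EE l B * EE l C
  = - tL l * (vL l * qq A B C E (uL l) (tL l) + cP A B C E l)"
  unfolding cP_def qalpha_def qbeta_def qgamma_def EE_def NX_def NY_def rx0_def rx1_def rx2_def ry0_def ry1_def ry2_def qq_def rx_def ry_def by algebra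

lemma Nx: assumes "vL l * qq A B C E (uL l) (tL l) + cP A B C E l = 0"
  shows "((vL l * uL A - uL l * vL A) * EE l C + (vL l * uL C - uL l * vL C) * EE l A) * qq A B C E (uL l) (tL l)
    = rx A B C E (uL l) (tL l) * EE l A * EE l C"
  using assms unfolding cP_def qalpha_def qbeta_def qgamma_def EE_def NX_def NY_def rx0_def rx1_def rx2_def ry0_def ry1_def ry2_def qq_def rx_def ry_def by algebra

lemma Ny: assumes "vL l * qq A B C E (uL l) (tL l) + cP A B C E l = 0"
  shows "((tL A * vL l - tL l * vL A) * EE l C + (tL C * vL l - tL l * vL C) * EE l A) * qq A B C E (uL l) (tL l)
    = ry A B C E (uL l) (tL l) * EE l A * EE l C"
  using assms unfolding cP_def qalpha_def qbeta_def qgamma_def EE_def NX_def NY_def rx0_def rx1_def rx2_def ry0_def ry1_def ry2_def qq_def rx_def ry_def by algebra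

lemma sideAq: "qq A B C E (uL A) (tL A) = -(EE A B * EE A C * EE A E)"
  unfolding qalpha_def qbeta_def qgamma_def EE_def NX_def NY_def rx0_def rx1_def rx2_def ry0_def ry1_def ry2_def qq_def rx_def ry_def by algebra
lemma sideAx: "(NX A B * EE A E + NX A E * EE A B) * qq A B C E (uL A) (tL A)
   = rx A B C E (uL A) (tL A) * EE A B * EE A E"
  unfolding qalpha_def qbeta_def qgamma_def EE_def NX_def NY_def rx0_def rx1_def rx2_def ry0_def ry1_def ry2_def qq_def rx_def ry_def by algebra
lemma sideAy: "(NY A B * EE A E + NY A E * EE A B) * qq A B C E (uL A) (tL A)
   = ry A B C E (uL A) (tL A) * EE A B * EE A E"
  unfolding qalpha_def qbeta_def qgamma_def EE_def NX_def NY_def rx0_def rx1_def rx2_def ry0_def ry1_def ry2_def qq_def rx_def ry_def by algebra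

lemma sideBq: "qq A B C E (uL B) (tL B) = EE B A * EE B C * EE B E"
  unfolding qalpha_def qbeta_def qgamma_def EE_def NX_def NY_def rx0_def rx1_def rx2_def ry0_def ry1_def ry2_def qq_def rx_def ry_def by algebra
lemma sideBx: "(NX B A * EE B C + NX B C * EE B A) * qq A B C E (uL B) (tL B)
   = rx A B C E (uL B) (tL B) * EE B A * EE B C"
  unfolding qalpha_def qbeta_def qgamma_def EE_def NX_def NY_def rx0_def rx1_def rx2_def ry0_def ry1_def ry2_def qq_def rx_def ry_def by algebra
lemma sideBy: "(NY B A * EE B C + NY B C * EE B A) * qq A B C E (uL B) (tL B)
   = ry A B C E (uL B) (tL B) * EE B A * EE B C"
  unfolding qalpha_def qbeta_def qgamma_def EE_def NX_def NY_def rx0_def rx1_def rx2_def ry0_def ry1_def ry2_def qq_def rx_def ry_def by algebra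

lemma sideCq: "qq A B C E (uL C) (tL C) = -(EE C A * EE C B * EE C E)"
  unfolding qalpha_def qbeta_def qgamma_def EE_def NX_def NY_def rx0_def rx1_def rx2_def ry0_def ry1_def ry2_def qq_def rx_def ry_def by algebra
lemma sideCx: "(NX C B * EE C E + NX C E * EE C B) * qq A B C E (uL C) (tL C)
   = rx A B C E (uL C) (tL C) * EE C B * EE C E"
  unfolding qalpha_def qbeta_def qgamma_def EE_def NX_def NY_def rx0_def rx1_def rx2_def ry0_def ry1_def ry2_def qq_def rx_def ry_def by algebra
lemma sideCy: "(NY C B * EE C E + NY C E * EE C B) * qq A B C E (uL C) (tL C)
   = ry A B C E (uL C) (tL C) * EE C B * EE C E"
  unfolding qalpha_def qbeta_def qgamma_def EE_def NX_def NY_def rx0_def rx1_def rx2_def ry0_def ry1_def ry2_def qq_def rx_def ry_def by algebra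

lemma sideEq: "qq A B C E (uL E) (tL E) = EE E A * EE E B * EE E C"
  unfolding qalpha_def qbeta_def qgamma_def EE_def NX_def NY_def rx0_def rx1_def rx2_def ry0_def ry1_def ry2_def qq_def rx_def ry_def by algebra
lemma sideEx: "(NX E A * EE E C + NX E C * EE E A) * qq A B C E (uL E) (tL E)
   = rx A B C E (uL E) (tL E) * EE E A * EE E C"
  unfolding qalpha_def qbeta_def qgamma_def EE_def NX_def NY_def rx0_def rx1_def rx2_def ry0_def ry1_def ry2_def qq_def rx_def ry_def by algebra
lemma sideEy: "(NY E A * EE E C + NY E C * EE E A) * qq A B C E (uL E) (tL E)
   = ry A B C E (uL E) (tL E) * EE E A * EE E C"
  unfolding qalpha_def qbeta_def qgamma_def EE_def NX_def NY_def rx0_def rx1_def rx2_def ry0_def ry1_def ry2_def qq_def rx_def ry_def by algebra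

lemma cross_zero: fixes a1 a2 b1 b2 x y :: "'a::field"
  assumes "a1*x + a2*y = 0" "b1*x + b2*y = 0" "\<not> (x = 0 \<and> y = 0)"
  shows "a1*b2 - a2*b1 = 0"
proof -
  have "(a1*b2 - a2*b1) * x = 0" using assms(1,2) by algebra
  moreover have "(a1*b2 - a2*b1) * y = 0" using assms(1,2) by algebra
  ultimately show ?thesis using assms(3) by auto
qed

lemma final_alg:
  fixes al be ga r0 r1 r2 s0 s1 s2 u1 t1 u2 t2 Sx Sy :: "'a::field"
  assumes two: "(2::'a) \<noteq> 0" and D: "al*ga - be*be \<noteq> 0"
    and q1: "ga*u1*u1 - 2*be*u1*t1 + al*t1*t1 \<noteq> 0"
    and q2: "ga*u2*u2 - 2*be*u2*t2 + al*t2*t2 \<noteq> 0"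
    and d2: "\<not> (u2 = 0 \<and> t2 = 0)"
    and T: "det3 r0 r1 r2 s0 s1 s2 ga (-2*be) al \<noteq> 0"
    and Sx: "Sx * (al*ga - be*be) = al*r0 + be*r1 + ga*r2"
    and Sy: "Sy * (al*ga - be*be) = al*s0 + be*s1 + ga*s2"
  shows "((r0*u1*u1 + r1*u1*t1 + r2*t1*t1) / (ga*u1*u1 - 2*be*u1*t1 + al*t1*t1)
          + (r0*u2*u2 + r1*u2*t2 + r2*t2*t2) / (ga*u2*u2 - 2*be*u2*t2 + al*t2*t2) = Sx
       \<and> (s0*u1*u1 + s1*u1*t1 + s2*t1*t1) / (ga*u1*u1 - 2*be*u1*t1 + al*t1*t1)
          + (s0*u2*u2 + s1*u2*t2 + s2*t2*t2) / (ga*u2*u2 - 2*be*u2*t2 + al*t2*t2) = Sy)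
     \<longleftrightarrow> ga*u1*u2 - be*u1*t2 - be*t1*u2 + al*t1*t2 = 0"
proof -
  define D where "D = al*ga - be*be"
  define Q1 where "Q1 = ga*u1*u1 - 2*be*u1*t1 + al*t1*t1"
  define Q2 where "Q2 = ga*u2*u2 - 2*be*u2*t2 + al*t2*t2"
  define Q12 where "Q12 = ga*u1*u2 - be*u1*t2 - be*t1*u2 + al*t1*t2"
  define apx where "apx = al*r0 + be*r1 + ga*r2"
  define apy where "apy = al*s0 + be*s1 + ga*s2"
  define rb where "rb = 2*r0*u1*u2 + r1*(u1*t2+t1*u2) + 2*r2*t1*t2"
  define sb where "sb = 2*s0*u1*u2 + s1*(u1*t2+t1*u2) + 2*s2*t1*t2"
  have DQ: "D \<noteq> 0" "Q1 \<noteq> 0" "Q2 \<noteq> 0" using D q1 q2 by (simp_all add: D_def Q1_def Q2_def)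
  have gen: "(R1 / Q1 + R2 / Q2 = S) \<longleftrightarrow> D*(R1*Q2 + R2*Q1) - (S*D)*Q1*Q2 = 0" for R1 R2 S
  proof -
    have "(R1 / Q1 + R2 / Q2 = S) \<longleftrightarrow> R1*Q2 + R2*Q1 = S*Q1*Q2"
      using DQ by (simp add: field_simps)
    also have "\<dots> \<longleftrightarrow> D*(R1*Q2 + R2*Q1) = D*(S*Q1*Q2)" using DQ by simp
    finally show ?thesis by (simp add: algebra_simps)
  qed
  have ix: "D*((r0*u1*u1 + r1*u1*t1 + r2*t1*t1)*Q2 + (r0*u2*u2 + r1*u2*t2 + r2*t2*t2)*Q1) - apx*Q1*Q2
      = Q12 * (D*rb - apx*Q12)"
    unfolding D_def Q1_def Q2_def Q12_def apx_def rb_def by algebra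
  have iy: "D*((s0*u1*u1 + s1*u1*t1 + s2*t1*t1)*Q2 + (s0*u2*u2 + s1*u2*t2 + s2*t2*t2)*Q1) - apy*Q1*Q2
      = Q12 * (D*sb - apy*Q12)"
    unfolding D_def Q1_def Q2_def Q12_def apy_def sb_def by algebra
  have e1: "D*((r0*u1*u1 + r1*u1*t1 + r2*t1*t1)*Q2 + (r0*u2*u2 + r1*u2*t2 + r2*t2*t2)*Q1) - (Sx*D)*Q1*Q2
      = Q12 * (D*rb - apx*Q12)"
    using ix Sx[folded D_def apx_def] by simp
  have e2: "D*((s0*u1*u1 + s1*u1*t1 + s2*t1*t1)*Q2 + (s0*u2*u2 + s1*u2*t2 + s2*t2*t2)*Q1) - (Sy*D)*Q1*Q2
      = Q12 * (D*sb - apy*Q12)"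
    using iy Sy[folded D_def apy_def] by simp
  have ex: "((r0*u1*u1 + r1*u1*t1 + r2*t1*t1) / Q1 + (r0*u2*u2 + r1*u2*t2 + r2*t2*t2) / Q2 = Sx)
     \<longleftrightarrow> Q12 * (D*rb - apx*Q12) = 0"
    unfolding gen e1 ..
  have ey: "((s0*u1*u1 + s1*u1*t1 + s2*t1*t1) / Q1 + (s0*u2*u2 + s1*u2*t2 + s2*t2*t2) / Q2 = Sy)
     \<longleftrightarrow> Q12 * (D*sb - apy*Q12) = 0"
    unfolding gen e2 ..
  have main: "Q12 = 0" if h1: "Q12 * (D*rb - apx*Q12) = 0" and h2: "Q12 * (D*sb - apy*Q12) = 0"
  proof (rule ccontr)
    assume nz: "Q12 \<noteq> 0"
    have z1: "D*rb - apx*Q12 = 0" using h1 nz by simp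
    have z2: "D*sb - apy*Q12 = 0" using h2 nz by simp
    define g0 where "g0 = 2*D*r0 - apx*ga"
    define g1 where "g1 = 2*D*r1 - apx*(-2*be)"
    define g2 where "g2 = 2*D*r2 - apx*al"
    define h0 where "h0 = 2*D*s0 - apy*ga"
    define h1 where "h1 = 2*D*s1 - apy*(-2*be)"
    define h2 where "h2 = 2*D*s2 - apy*al"
    have ag: "al*g0 + be*g1 + ga*g2 = 0" unfolding g0_def g1_def g2_def apx_def D_def by algebra
    have ah: "al*h0 + be*h1 + ga*h2 = 0" unfolding h0_def h1_def h2_def apy_def D_def by algebra
    have c1: "(2*g0*u1+g1*t1)*u2 + (g1*u1+2*g2*t1)*t2 = 0"
      using z1 unfolding g0_def g1_def g2_def rb_def Q12_def by algebra
    have c2: "(2*h0*u1+h1*t1)*u2 + (h1*u1+2*h2*t1)*t2 = 0"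
      using z2 unfolding h0_def h1_def h2_def sb_def Q12_def by algebra
    have phi: "(2*g0*u1+g1*t1)*(h1*u1+2*h2*t1) - (g1*u1+2*g2*t1)*(2*h0*u1+h1*t1) = 0"
      using cross_zero[OF c1 c2 d2] .
    have "det3 g0 g1 g2 h0 h1 h2 ga (-2*be) al * Q1 = 0"
      using L6[OF ag ah, of u1 t1] phi unfolding Q1_def by simp
    hence "det3 g0 g1 g2 h0 h1 h2 ga (-2*be) al = 0" using DQ by simp
    moreover have "det3 g0 g1 g2 h0 h1 h2 ga (-2*be) al = 4*D*D*det3 r0 r1 r2 s0 s1 s2 ga (-2*be) al"
      unfolding det3_def g0_def g1_def g2_def h0_def h1_def h2_def by algebra
    ultimately have "4*D*D*det3 r0 r1 r2 s0 s1 s2 ga (-2*be) al = 0" by simp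
    moreover have "(4::'a) \<noteq> 0" using two by (metis mult_2_right mult_eq_0_iff numeral_Bit0 one_add_one)
    ultimately show False using DQ T by simp
  qed
  show ?thesis unfolding Q1_def[symmetric] Q2_def[symmetric] Q12_def[symmetric]
    using ex ey main by auto
qed



lemma tL_simp[simp]: "tL (a,b,c) = a" by (simp add: tL_def)
lemma uL_simp[simp]: "uL (a,b,c) = b" by (simp add: uL_def)
lemma vL_simp[simp]: "vL (a,b,c) = c" by (simp add: vL_def)

lemma line_eqI: "tL L = tL M \<Longrightarrow> uL L = uL M \<Longrightarrow> vL L = vL M \<Longrightarrow> L = M"
  by (simp add: prod_eq_iff tL_def uL_def vL_def)

lemma par_iff: "is_line L \<Longrightarrow> is_line M \<Longrightarrow> parallel L M \<longleftrightarrow> EE L M = 0"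
  unfolding is_line_def parallel_def EE_def by (auto simp: algebra_simps)

lemma line_nz: "is_line L \<Longrightarrow> \<not> (uL L = 0 \<and> tL L = 0)"
  unfolding is_line_def by auto

lemma EE_swap: "EE X Y = - EE Y X" unfolding EE_def by (simp add: algebra_simps)

lemma pt_uniq:
  assumes "EE L M \<noteq> 0" "on_line p L" "on_line p M"
  shows "p = (NX L M / EE L M, NY L M / EE L M)"
proof -
  have "fst p * EE L M = NX L M" using assms(2,3) unfolding on_line_def EE_def NX_def by algebra
  moreover have "snd p * EE L M = NY L M" using assms(2,3) unfolding on_line_def EE_def NY_def by algebra
  ultimately show ?thesis using assms(1) by (simp add: prod_eq_iff field_simps)
qed

lemma pt_on:
  assumes "EE L M \<noteq> 0"
  shows "on_line (NX L M / EE L M, NY L M / EE L M) L \<and> on_line (NX L M / EE L M, NY L M / EE L M) M"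
proof -
  have a: "tL L * NX L M - uL L * NY L M + vL L * EE L M = 0" unfolding EE_def NX_def NY_def by algebra
  have b: "tL M * NX L M - uL M * NY L M + vL M * EE L M = 0" unfolding EE_def NX_def NY_def by algebra
  have "tL L * (NX L M / EE L M) - uL L * (NY L M / EE L M) + vL L
        = (tL L * NX L M - uL L * NY L M + vL L * EE L M) / EE L M"
    using assms by (simp add: field_simps)
  moreover have "tL M * (NX L M / EE L M) - uL M * (NY L M / EE L M) + vL M
        = (tL M * NX L M - uL M * NY L M + vL M * EE L M) / EE L M"
    using assms by (simp add: field_simps)
  ultimately show ?thesis unfolding on_line_def using a b by simp
qed

lemma meet_eq:
  assumes "EE L M \<noteq> 0"
  shows "meet L M = (NX L M / EE L M, NY L M / EE L M)"
  unfolding meet_def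
  by (rule the_equality) (use pt_on[OF assms] pt_uniq[OF assms] in auto)

lemma meet_on: "EE L M \<noteq> 0 \<Longrightarrow> on_line (meet L M) L \<and> on_line (meet L M) M"
  using meet_eq pt_on by metis

lemma meet_uniq: "EE L M \<noteq> 0 \<Longrightarrow> on_line p L \<Longrightarrow> on_line p M \<Longrightarrow> meet L M = p"
  using meet_eq pt_uniq by metis

lemma dir_on: "on_line p L \<Longrightarrow> on_line q L \<Longrightarrow> tL L * (fst q - fst p) - uL L * (snd q - snd p) = 0"
  unfolding on_line_def by algebra

lemma line_through_ex1:
  assumes "p \<noteq> (q::('a::field) \<times> 'a)"
  shows "\<exists>!L. is_line L \<and> on_line p L \<and> on_line q L"
proof -
  have ex: "\<exists>L. is_line L \<and> on_line p L \<and> on_line q L"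
  proof (cases "fst p = fst q")
    case True
    show ?thesis
      by (rule exI[of _ "(1, 0, - fst p)"]) (use True in \<open>simp add: is_line_def on_line_def\<close>)
  next
    case False
    define t where "t = (snd q - snd p) / (fst q - fst p)"
    have "t * (fst q - fst p) = snd q - snd p" using False by (simp add: t_def)
    then show ?thesis
      by (intro exI[of _ "(t, 1, snd p - t * fst p)"]) (simp add: is_line_def on_line_def algebra_simps)
  qed
  have un: "L = M" if L: "is_line L" "on_line p L" "on_line q L" and M: "is_line M" "on_line p M" "on_line q M" for L M
  proof -
    have dL: "tL L * (fst q - fst p) - uL L * (snd q - snd p) = 0" using dir_on L by blast
    have dM: "tM * (fst q - fst p) - uM * (snd q - snd p) = 0" if "tM = tL M" "uM = uL M" for tM uM
      using dir_on M that by blast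
    have "EE L M = 0"
    proof (cases "fst q - fst p = 0")
      case True
      then have "snd q - snd p \<noteq> 0" using assms by (auto simp: prod_eq_iff)
      then have "uL L = 0" "uL M = 0" using dL dM[OF refl refl] True by auto
      then show ?thesis by (simp add: EE_def)
    next
      case False
      have "EE L M * (fst q - fst p) = 0" using dL dM[OF refl refl] unfolding EE_def by algebra
      then show ?thesis using False by simp
    qed
    then have "parallel L M" using par_iff L(1) M(1) by blast
    then have "tL L = tL M" "uL L = uL M" unfolding parallel_def by auto
    moreover have "vL L = vL M" using L(2) M(2) calculation unfolding on_line_def by algebra
    ultimately show ?thesis by (rule line_eqI)
  qed
  show ?thesis using ex un by blast
qed

lemma line_through_props:
  assumes "p \<noteq> q"
  shows "is_line (line_through p q) \<and> on_line p (line_through p q) \<and> on_line q (line_through p q)"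
  unfolding line_through_def using theI'[OF line_through_ex1[OF assms]] .

lemma midpt_eq_iff:
  assumes "(2::'a::field) \<noteq> 0"
  shows "midpt (a::'a \<times> 'a) b = midpt c d \<longleftrightarrow> fst a + fst b = fst c + fst d \<and> snd a + snd b = snd c + snd d"
proof -
  have h: "x/2 = y/2 \<longleftrightarrow> x = y" for x y :: 'a using assms divide_cancel_right by metis
  show ?thesis unfolding midpt_def prod.inject h ..
qed



lemma frac4:
  fixes a b c d x1 x2 x3 x4 :: "'a::field"
  assumes "a \<noteq> 0" "b \<noteq> 0" "c \<noteq> 0" "d \<noteq> 0"
  shows "x1/a + x3/c = x2/b + x4/d \<longleftrightarrow> x1*b*c*d + x3*a*b*d - x2*a*c*d - x4*a*b*c = 0"
proof -
  have e: "(x1/a + x3/c - (x2/b + x4/d)) * (a*b*c*d) = x1*b*c*d + x3*a*b*d - x2*a*c*d - x4*a*b*c"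
    using assms by (simp add: field_simps)
  have "x1/a + x3/c = x2/b + x4/d \<longleftrightarrow> (x1/a + x3/c - (x2/b + x4/d)) * (a*b*c*d) = 0"
    using assms by simp
  then show ?thesis using e by simp
qed

lemma frac2:
  fixes a b q x y r :: "'a::field"
  assumes "a \<noteq> 0" "b \<noteq> 0" "q \<noteq> 0" "(2::'a) \<noteq> 0" "(x*b + y*a)*q = r*a*b"
  shows "(x/a + y/b)/2 = r/(2*q)"
proof -
  have "x/a + y/b = (x*b + y*a)/(a*b)" using assms by (simp add: field_simps)
  also have "\<dots> = r/q" using assms by (simp add: field_simps)
  finally show ?thesis by simp
qed

definition bmid :: "('a::field) line \<Rightarrow> 'a line \<Rightarrow> 'a line \<Rightarrow> 'a line \<Rightarrow> 'a line \<Rightarrow> 'a \<times> 'a" where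
  "bmid A B C E l = (rx A B C E (uL l) (tL l) / (2 * qq A B C E (uL l) (tL l)),
                                 ry A B C E (uL l) (tL l) / (2 * qq A B C E (uL l) (tL l)))"

context
  fixes A B C E :: "('a::field) line"
  assumes two: "(2::'a) \<noteq> 0"
    and lA: "is_line A" and lB: "is_line B" and lC: "is_line C" and lE: "is_line E"
    and dst: "A \<noteq> B" "A \<noteq> C" "A \<noteq> E" "B \<noteq> C" "B \<noteq> E" "C \<noteq> E"
    and nAB: "EE A B \<noteq> 0" and nBC: "EE B C \<noteq> 0" and nCE: "EE C E \<noteq> 0" and nEA: "EE E A \<noteq> 0"
    and nAC: "EE A C \<noteq> 0" and nBE: "EE B E \<noteq> 0"
    and diagx: "(fst (meet C E) - fst (meet A B)) * (snd (meet E A) - snd (meet B C))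
               - (snd (meet C E) - snd (meet A B)) * (fst (meet E A) - fst (meet B C)) \<noteq> 0"
begin

lemma mid_iff:
  assumes "EE m A \<noteq> 0" "EE m B \<noteq> 0" "EE m C \<noteq> 0" "EE m E \<noteq> 0" "\<not> (uL m = 0 \<and> tL m = 0)"
  shows "midpt (meet m A) (meet m C) = midpt (meet m B) (meet m E)
     \<longleftrightarrow> vL m * qq A B C E (uL m) (tL m) + cP A B C E m = 0"
proof -
  define Z where "Z = vL m * qq A B C E (uL m) (tL m) + cP A B C E m"
  have x: "NX m A / EE m A + NX m C / EE m C = NX m B / EE m B + NX m E / EE m E \<longleftrightarrow> uL m * Z = 0"
    unfolding frac4[OF assms(1,2,3,4)] using Bx[where l=m and A=A and B=B and C=C and E=E] unfolding NX_def Z_def by simp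
  have y: "NY m A / EE m A + NY m C / EE m C = NY m B / EE m B + NY m E / EE m E \<longleftrightarrow> tL m * Z = 0"
    unfolding frac4[OF assms(1,2,3,4)] using By[where l=m and A=A and B=B and C=C and E=E] unfolding NY_def Z_def by simp
  show ?thesis
    unfolding meet_eq[OF assms(1)] meet_eq[OF assms(2)] meet_eq[OF assms(3)] meet_eq[OF assms(4)]
      midpt_eq_iff[OF two] fst_conv snd_conv x y Z_def[symmetric]
    using assms(5) by auto
qed

lemma nondeg:
  assumes lis: "is_line l" and n: "EE l A \<noteq> 0" "EE l B \<noteq> 0" "EE l C \<noteq> 0" "EE l E \<noteq> 0"
    and q0: "qq A B C E (uL l) (tL l) = 0" and c0: "cP A B C E l = 0"
  shows False
proof -
  have nzl: "\<not> (uL l = 0 \<and> tL l = 0)" using line_nz[OF lis] .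
  have gen: "midpt (meet m A) (meet m C) = midpt (meet m B) (meet m E)"
    if "tL m = tL l" "uL m = uL l" for m
  proof -
    have EEm: "EE m X = EE l X" for X using that by (simp add: EE_def)
    have "cP A B C E m = cP A B C E l" by (simp add: cP_def EEm)
    then show ?thesis using mid_iff[of m] n nzl q0 c0 that by (simp add: EEm)
  qed
  define P1 where "P1 = meet A B"
  define P2 where "P2 = meet B C"
  define P3 where "P3 = meet C E"
  define P4 where "P4 = meet E A"
  have nBA: "EE B A \<noteq> 0" and nAE: "EE A E \<noteq> 0" using nAB nEA EE_swap by (metis neg_equal_0_iff_equal)+
  have oP1: "on_line P1 A" "on_line P1 B" using meet_on[OF nAB] P1_def by auto
  have oP2: "on_line P2 B" "on_line P2 C" using meet_on[OF nBC] P2_def by auto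
  have oP4: "on_line P4 E" "on_line P4 A" using meet_on[OF nEA] P4_def by auto
  define l1 where "l1 = (tL l, uL l, uL l * snd P1 - tL l * fst P1)"
  define l2 where "l2 = (tL l, uL l, uL l * snd P2 - tL l * fst P2)"
  have E1: "EE l1 X = EE l X" for X by (simp add: l1_def EE_def)
  have E2: "EE l2 X = EE l X" for X by (simp add: l2_def EE_def)
  have on1: "on_line P1 l1" unfolding l1_def on_line_def by simp
  have on2: "on_line P2 l2" unfolding l2_def on_line_def by simp
  have m1A: "meet l1 A = P1" using meet_uniq[of l1 A P1] E1 n on1 oP1 by simp
  have m1B: "meet l1 B = P1" using meet_uniq[of l1 B P1] E1 n on1 oP1 by simp
  have "midpt (meet l1 A) (meet l1 C) = midpt (meet l1 B) (meet l1 E)" by (rule gen) (simp_all add: l1_def)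
  then have "meet l1 C = meet l1 E" unfolding midpt_eq_iff[OF two] m1A m1B by (simp add: prod_eq_iff)
  then have "on_line (meet l1 C) C" "on_line (meet l1 C) E"
    using meet_on[of l1 C] meet_on[of l1 E] E1 n by auto
  then have "meet C E = meet l1 C" using meet_uniq[OF nCE] by blast
  then have "on_line P3 l1" using meet_on[of l1 C] E1 n P3_def by auto
  then have d1: "tL l * (fst P3 - fst P1) - uL l * (snd P3 - snd P1) = 0"
    unfolding on_line_def l1_def by (simp add: algebra_simps)
  have m2B: "meet l2 B = P2" using meet_uniq[of l2 B P2] E2 n on2 oP2 by simp
  have m2C: "meet l2 C = P2" using meet_uniq[of l2 C P2] E2 n on2 oP2 by simp
  have "midpt (meet l2 A) (meet l2 C) = midpt (meet l2 B) (meet l2 E)" by (rule gen) (simp_all add: l2_def)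
  then have "meet l2 A = meet l2 E" unfolding midpt_eq_iff[OF two] m2B m2C by (simp add: prod_eq_iff)
  then have "on_line (meet l2 A) E" "on_line (meet l2 A) A"
    using meet_on[of l2 A] meet_on[of l2 E] E2 n by auto
  then have "meet E A = meet l2 A" using meet_uniq[OF nEA] by blast
  then have "on_line P4 l2" using meet_on[of l2 A] E2 n P4_def by auto
  then have d2: "tL l * (fst P4 - fst P2) - uL l * (snd P4 - snd P2) = 0"
    unfolding on_line_def l2_def by (simp add: algebra_simps)
  have "(fst P3 - fst P1) * (snd P4 - snd P2) - (snd P3 - snd P1) * (fst P4 - fst P2) = 0"
    by (rule cross_zero[where x="tL l" and y="- uL l"]) (use d1 d2 nzl in \<open>auto simp: algebra_simps\<close>)
  then show False using diagx P1_def P2_def P3_def P4_def by simp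
qed


lemma par_contra: "is_line X \<Longrightarrow> is_line Y \<Longrightarrow> EE X Y \<noteq> 0 \<Longrightarrow> parallel l X \<Longrightarrow> parallel l Y \<Longrightarrow> False"
  using par_iff unfolding parallel_def by metis

lemma EEnz: "EE B A \<noteq> 0" "EE C B \<noteq> 0" "EE E C \<noteq> 0" "EE A E \<noteq> 0" "EE C A \<noteq> 0" "EE E B \<noteq> 0"
  using nAB nBC nCE nEA nAC nBE EE_swap by (metis neg_equal_0_iff_equal)+

lemma npar: "\<not> parallel A B" "\<not> parallel B A" "\<not> parallel B C" "\<not> parallel C B" "\<not> parallel C E"
   "\<not> parallel E C" "\<not> parallel E A" "\<not> parallel A E"
  using par_iff lA lB lC lE nAB nBC nCE nEA EEnz by blast+

lemma bis_main:
  assumes bis: "bisects A B C E l"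
  shows "qq A B C E (uL l) (tL l) \<noteq> 0 \<and> (crosses l A C \<or> crosses l B E) \<and>
         bisector_mid A B C E l = Fin (bmid A B C E l)"
proof -
  have lis: "is_line l" using bis unfolding bisects_def by simp
  consider "l = A" | "l = B" | "l = C" | "l = E" | "l \<noteq> A \<and> l \<noteq> B \<and> l \<noteq> C \<and> l \<noteq> E" by blast
  then show ?thesis
  proof cases
    case 1
    have q: "qq A B C E (uL A) (tL A) \<noteq> 0" unfolding sideAq using nAB nAC EEnz by simp
    have cr: "crosses A B E" unfolding crosses_def using dst npar by auto
    have "bisector_mid A B C E A = Fin (midpt (meet A B) (meet A E))"
      unfolding bisector_mid_def crosses_def midl_def using npar by simp
    also have "midpt (meet A B) (meet A E) = bmid A B C E A"
      unfolding meet_eq[OF nAB] meet_eq[OF EEnz(4)] midpt_def bmid_def fst_conv snd_conv prod.inject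
      using frac2[OF nAB EEnz(4) q two sideAx] frac2[OF nAB EEnz(4) q two sideAy] by simp
    finally show ?thesis using q cr 1 by simp
  next
    case 2
    have q: "qq A B C E (uL B) (tL B) \<noteq> 0" unfolding sideBq using nBC nBE EEnz by simp
    have cr: "crosses B A C" unfolding crosses_def using dst npar by auto
    have "bisector_mid A B C E B = Fin (midpt (meet B A) (meet B C))"
      unfolding bisector_mid_def midl_def using cr npar by simp
    also have "midpt (meet B A) (meet B C) = bmid A B C E B"
      unfolding meet_eq[OF EEnz(1)] meet_eq[OF nBC] midpt_def bmid_def fst_conv snd_conv prod.inject
      using frac2[OF EEnz(1) nBC q two sideBx] frac2[OF EEnz(1) nBC q two sideBy] by simp
    finally show ?thesis using q cr 2 by simp
  next
    case 3
    have q: "qq A B C E (uL C) (tL C) \<noteq> 0" unfolding sideCq using nCE EEnz by simp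
    have cr: "crosses C B E" unfolding crosses_def using dst npar by auto
    have "bisector_mid A B C E C = Fin (midpt (meet C B) (meet C E))"
      unfolding bisector_mid_def crosses_def midl_def using npar by simp
    also have "midpt (meet C B) (meet C E) = bmid A B C E C"
      unfolding meet_eq[OF EEnz(2)] meet_eq[OF nCE] midpt_def bmid_def fst_conv snd_conv prod.inject
      using frac2[OF EEnz(2) nCE q two sideCx] frac2[OF EEnz(2) nCE q two sideCy] by simp
    finally show ?thesis using q cr 3 by simp
  next
    case 4
    have q: "qq A B C E (uL E) (tL E) \<noteq> 0" unfolding sideEq using nEA EEnz by simp
    have cr: "crosses E A C" unfolding crosses_def using dst npar by auto
    have "bisector_mid A B C E E = Fin (midpt (meet E A) (meet E C))"
      unfolding bisector_mid_def midl_def using cr npar by simp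
    also have "midpt (meet E A) (meet E C) = bmid A B C E E"
      unfolding meet_eq[OF nEA] meet_eq[OF EEnz(3)] midpt_def bmid_def fst_conv snd_conv prod.inject
      using frac2[OF nEA EEnz(3) q two sideEx] frac2[OF nEA EEnz(3) q two sideEy] by simp
    finally show ?thesis using q cr 4 by simp
  next
    case 5
    have cAC: "crosses l A C" unfolding crosses_def using 5 par_contra[OF lA lC nAC] by blast
    have cBE: "crosses l B E" unfolding crosses_def using 5 par_contra[OF lB lE nBE] by blast
    have meq: "midl l A C = midl l B E" using bis cAC cBE unfolding bisects_def by simp
    have np1: "\<not> (parallel l A \<or> parallel l C)"
    proof
      assume h: "parallel l A \<or> parallel l C"
      then have "midl l B E = Infty (uL l, tL l)" using meq unfolding midl_def by simp
      then have "parallel l B \<or> parallel l E" unfolding midl_def by (auto split: if_splits)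
      then show False using h par_contra lA lB lC lE nAB nEA nBC nCE EEnz by metis
    qed
    have np2: "\<not> (parallel l B \<or> parallel l E)"
    proof
      assume h: "parallel l B \<or> parallel l E"
      then have "midl l A C = Infty (uL l, tL l)" using meq unfolding midl_def by simp
      then have "parallel l A \<or> parallel l C" unfolding midl_def by (auto split: if_splits)
      then show False using h par_contra lA lB lC lE nAB nEA nBC nCE EEnz by metis
    qed
    have n: "EE l A \<noteq> 0" "EE l B \<noteq> 0" "EE l C \<noteq> 0" "EE l E \<noteq> 0"
      using np1 np2 par_iff lis lA lB lC lE by blast+
    have "midpt (meet l A) (meet l C) = midpt (meet l B) (meet l E)"
      using meq np1 np2 unfolding midl_def by simp
    then have Z: "vL l * qq A B C E (uL l) (tL l) + cP A B C E l = 0"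
      using mid_iff[OF n line_nz[OF lis]] by simp
    have q: "qq A B C E (uL l) (tL l) \<noteq> 0"
    proof
      assume q0: "qq A B C E (uL l) (tL l) = 0"
      then have "cP A B C E l = 0" using Z by simp
      then show False using nondeg[OF lis n q0] by simp
    qed
    have "bisector_mid A B C E l = Fin (midpt (meet l A) (meet l C))"
      unfolding bisector_mid_def midl_def using cAC np1 by simp
    also have "midpt (meet l A) (meet l C) = bmid A B C E l"
      unfolding meet_eq[OF n(1)] meet_eq[OF n(3)] midpt_def bmid_def fst_conv snd_conv prod.inject
      using frac2[OF n(1) n(3) q two Nx[OF Z, folded NX_def]] frac2[OF n(1) n(3) q two Ny[OF Z, folded NY_def]]
      by simp
    finally show ?thesis using q cAC by simp
  qed
qed

end



lemma avg4:
  fixes a b q1 q2 :: "'a::field"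
  assumes "(2::'a) \<noteq> 0"
  shows "(a/(2*q1) + b/(2*q2))/2 = (a/q1 + b/q2)/4"
proof -
  have e1: "a/(2*q1) = (a/q1)/2" "b/(2*q2) = (b/q2)/2" by simp_all
  have e2: "(x/2 + y/2)/2 = (x+y)/4" for x y :: 'a
  proof -
    have "(x/2 + y/2)/2 = (x+y)/(2*2)" by (simp only: add_divide_distrib[symmetric] divide_divide_eq_left)
    also have "(2::'a)*2 = 4" by simp
    finally show ?thesis .
  qed
  show ?thesis unfolding e1 e2 ..
qed

lemma four_nz: "(2::'a::field) \<noteq> 0 \<Longrightarrow> (4::'a) \<noteq> 0"
  by (metis mult_2_right mult_eq_0_iff numeral_Bit0 one_add_one)

lemma dir_trans:
  fixes t u a1 a2 b1 b2 :: "'a::field"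
  assumes "t*a1 - u*a2 = 0" "a1*b2 - a2*b1 = 0" "\<not> (a1 = 0 \<and> a2 = 0)"
  shows "t*b1 - u*b2 = 0"
proof -
  have "(t*b1 - u*b2) * a1 = 0" using assms(1,2) by algebra
  moreover have "(t*b1 - u*b2) * a2 = 0" using assms(1,2) by algebra
  ultimately show ?thesis using assms(3) by auto
qed

theorem corollary6p6:
  fixes A B A' B' l1 l2 :: "('a::field) line"
  assumes char: "(2::'a) \<noteq> 0"
    and quad: "is_quad A B A' B'"
    and no_par_sides: "\<not> parallel A A'" "\<not> parallel B B'"
    and no_par_diags: "\<not> parallel (diag1 A B A' B') (diag2 A B A' B')"
    and bis1: "bisects A B A' B' l1"
    and bis2: "bisects A B A' B' l2"
  shows "Q_antipodal A B A' B' l1 l2 \<longleftrightarrow> Q_orthogonal A B A' B' l1 l2"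
proof -
  have lA: "is_line A" and lB: "is_line B" and lC: "is_line A'" and lE: "is_line B'"
    using quad unfolding is_quad_def by auto
  have dst: "A \<noteq> B" "A \<noteq> A'" "A \<noteq> B'" "B \<noteq> A'" "B \<noteq> B'" "A' \<noteq> B'"
    using quad unfolding is_quad_def by auto
  have nocom: "\<not> (\<exists>p. on_line p A \<and> on_line p B \<and> on_line p A' \<and> on_line p B')"
    using quad unfolding is_quad_def by auto
  have pr: "\<not> parallel A B" "\<not> parallel B A'" "\<not> parallel A' B'" "\<not> parallel B' A"
    using quad unfolding is_quad_def by auto
  have nAB: "EE A B \<noteq> 0" using pr par_iff lA lB by blast
  have nBC: "EE B A' \<noteq> 0" using pr par_iff lB lC by blast
  have nCE: "EE A' B' \<noteq> 0" using pr par_iff lC lE by blast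
  have nEA: "EE B' A \<noteq> 0" using pr par_iff lE lA by blast
  have nAC: "EE A A' \<noteq> 0" using no_par_sides par_iff lA lC by blast
  have nBE: "EE B B' \<noteq> 0" using no_par_sides par_iff lB lE by blast
  define P1 where "P1 = meet A B"
  define P2 where "P2 = meet B A'"
  define P3 where "P3 = meet A' B'"
  define P4 where "P4 = meet B' A"
  have o1: "on_line P1 A" "on_line P1 B" using meet_on[OF nAB] P1_def by auto
  have o2: "on_line P2 B" "on_line P2 A'" using meet_on[OF nBC] P2_def by auto
  have o3: "on_line P3 A'" "on_line P3 B'" using meet_on[OF nCE] P3_def by auto
  have o4: "on_line P4 B'" "on_line P4 A" using meet_on[OF nEA] P4_def by auto
  have P13: "P1 \<noteq> P3" using o1 o3 nocom by blast
  have P24: "P2 \<noteq> P4" using o2 o4 nocom by blast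
  have diagx: "(fst P3 - fst P1) * (snd P4 - snd P2) - (snd P3 - snd P1) * (fst P4 - fst P2) \<noteq> 0"
  proof
    assume cz: "(fst P3 - fst P1) * (snd P4 - snd P2) - (snd P3 - snd P1) * (fst P4 - fst P2) = 0"
    define d1 where "d1 = diag1 A B A' B'"
    define d2 where "d2 = diag2 A B A' B'"
    have h1: "is_line d1 \<and> on_line P1 d1 \<and> on_line P3 d1"
      unfolding d1_def diag1_def P1_def[symmetric] P3_def[symmetric] using line_through_props[OF P13] .
    have h2: "is_line d2 \<and> on_line P2 d2 \<and> on_line P4 d2"
      unfolding d2_def diag2_def P2_def[symmetric] P4_def[symmetric] using line_through_props[OF P24] .
    have w1: "\<not> (fst P3 - fst P1 = 0 \<and> snd P3 - snd P1 = 0)" using P13 by (auto simp: prod_eq_iff)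
    have w2: "\<not> (fst P4 - fst P2 = 0 \<and> snd P4 - snd P2 = 0)" using P24 by (auto simp: prod_eq_iff)
    have a1: "tL d1 * (fst P3 - fst P1) - uL d1 * (snd P3 - snd P1) = 0" using dir_on h1 by blast
    have a2: "tL d2 * (fst P4 - fst P2) - uL d2 * (snd P4 - snd P2) = 0" using dir_on h2 by blast
    have a3: "tL d1 * (fst P4 - fst P2) - uL d1 * (snd P4 - snd P2) = 0"
      using dir_trans[OF a1 cz w1] .
    have "tL d1 * (- uL d2) - (- uL d1) * tL d2 = 0"
      by (rule cross_zero[where x="fst P4 - fst P2" and y="snd P4 - snd P2"])
        (use a2 a3 w2 in \<open>auto simp: algebra_simps\<close>)
    then have "EE d1 d2 = 0" unfolding EE_def by (simp add: algebra_simps)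
    then have "parallel d1 d2" using par_iff h1 h2 by blast
    then show False using no_par_diags d1_def d2_def by simp
  qed
  note ctx = char lA lB lC lE dst nAB nBC nCE nEA nAC nBE diagx[unfolded P1_def P2_def P3_def P4_def]
  note B1 = bis_main[OF ctx bis1]
  note B2 = bis_main[OF ctx bis2]
  have lis2: "is_line l2" using bis2 unfolding bisects_def by simp
  define Sx where "Sx = NX A B / EE A B + NX B A' / EE B A' + NX A' B' / EE A' B' + NX B' A / EE B' A"
  define Sy where "Sy = NY A B / EE A B + NY B A' / EE B A' + NY A' B' / EE A' B' + NY B' A / EE B' A"
  have cen: "centroid A B A' B' = (Sx/4, Sy/4)"
    unfolding centroid_def Let_def meet_eq[OF nAB] meet_eq[OF nBC] meet_eq[OF nCE] meet_eq[OF nEA]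
    by (simp add: Sx_def Sy_def add_divide_distrib)
  have anti: "Q_antipodal A B A' B' l1 l2 \<longleftrightarrow> midpt (bmid A B A' B' l1) (bmid A B A' B' l2) = centroid A B A' B'"
    unfolding Q_antipodal_def using bis1 bis2 B1 B2 by auto
  have h4: "x/4 = y/4 \<longleftrightarrow> x = y" for x y :: 'a using four_nz[OF char] divide_cancel_right by metis
  have mm: "midpt (bmid A B A' B' l1) (bmid A B A' B' l2) =
     ((rx A B A' B' (uL l1) (tL l1) / qq A B A' B' (uL l1) (tL l1) + rx A B A' B' (uL l2) (tL l2) / qq A B A' B' (uL l2) (tL l2))/4,
      (ry A B A' B' (uL l1) (tL l1) / qq A B A' B' (uL l1) (tL l1) + ry A B A' B' (uL l2) (tL l2) / qq A B A' B' (uL l2) (tL l2))/4)"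
    by (simp add: midpt_def bmid_def avg4[OF char])
  have Pi: "EE A B * EE B A' * EE A' B' * EE B' A \<noteq> 0" using nAB nBC nCE nEA by simp
  have Sxe0: "Sx * (EE A B * EE B A' * EE A' B' * EE B' A) = NX A B * EE B A' * EE A' B' * EE B' A
      + NX B A' * EE A B * EE A' B' * EE B' A + NX A' B' * EE A B * EE B A' * EE B' A + NX B' A * EE A B * EE B A' * EE A' B'"
    unfolding Sx_def using nAB nBC nCE nEA by (simp add: field_simps)
  have Sye0: "Sy * (EE A B * EE B A' * EE A' B' * EE B' A) = NY A B * EE B A' * EE A' B' * EE B' A
      + NY B A' * EE A B * EE A' B' * EE B' A + NY A' B' * EE A B * EE B A' * EE B' A + NY B' A * EE A B * EE B A' * EE A' B'"
    unfolding Sy_def using nAB nBC nCE nEA by (simp add: field_simps)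
  have Sxe: "Sx * (qalpha A B A' B' * qgamma A B A' B' - qbeta A B A' B' * qbeta A B A' B')
      = qalpha A B A' B' * rx0 A B A' B' + qbeta A B A' B' * rx1 A B A' B' + qgamma A B A' B' * rx2 A B A' B'"
    unfolding detQ G4x using Sxe0 by simp
  have Sye: "Sy * (qalpha A B A' B' * qgamma A B A' B' - qbeta A B A' B' * qbeta A B A' B')
      = qalpha A B A' B' * ry0 A B A' B' + qbeta A B A' B' * ry1 A B A' B' + qgamma A B A' B' * ry2 A B A' B'"
    unfolding detQ G4y using Sye0 by simp
  have Dnz: "qalpha A B A' B' * qgamma A B A' B' - qbeta A B A' B' * qbeta A B A' B' \<noteq> 0"
    unfolding detQ using Pi by simp
  have fx: "fst P3 - fst P1 = (NX A' B' * EE A B - NX A B * EE A' B') / (EE A B * EE A' B')"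
    unfolding P1_def P3_def meet_eq[OF nAB] meet_eq[OF nCE] using nAB nCE by (simp add: field_simps)
  have fy: "snd P3 - snd P1 = (NY A' B' * EE A B - NY A B * EE A' B') / (EE A B * EE A' B')"
    unfolding P1_def P3_def meet_eq[OF nAB] meet_eq[OF nCE] using nAB nCE by (simp add: field_simps)
  have gx: "fst P4 - fst P2 = (NX B' A * EE B A' - NX B A' * EE B' A) / (EE B A' * EE B' A)"
    unfolding P2_def P4_def meet_eq[OF nBC] meet_eq[OF nEA] using nBC nEA by (simp add: field_simps)
  have gy: "snd P4 - snd P2 = (NY B' A * EE B A' - NY B A' * EE B' A) / (EE B A' * EE B' A)"
    unfolding P2_def P4_def meet_eq[OF nBC] meet_eq[OF nEA] using nBC nEA by (simp add: field_simps)
  have Dl: "(NX A' B' * EE A B - NX A B * EE A' B') * (NY B' A * EE B A' - NY B A' * EE B' A)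
      - (NY A' B' * EE A B - NY A B * EE A' B') * (NX B' A * EE B A' - NX B A' * EE B' A) \<noteq> 0"
  proof
    assume z: "(NX A' B' * EE A B - NX A B * EE A' B') * (NY B' A * EE B A' - NY B A' * EE B' A)
      - (NY A' B' * EE A B - NY A B * EE A' B') * (NX B' A * EE B A' - NX B A' * EE B' A) = 0"
    have "(fst P3 - fst P1) * (snd P4 - snd P2) - (snd P3 - snd P1) * (fst P4 - fst P2)
       = ((NX A' B' * EE A B - NX A B * EE A' B') * (NY B' A * EE B A' - NY B A' * EE B' A)
      - (NY A' B' * EE A B - NY A B * EE A' B') * (NX B' A * EE B A' - NX B A' * EE B' A))
        / ((EE A B * EE A' B') * (EE B A' * EE B' A))"
      unfolding fx fy gx gy times_divide_times_eq by (rule diff_divide_distrib[symmetric])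
    then show False using z diagx by simp
  qed
  have tAC: "tL A * uL A' - tL A' * uL A \<noteq> 0"
  proof
    assume "tL A * uL A' - tL A' * uL A = 0"
    then have "EE A A' = 0" unfolding EE_def by (simp add: algebra_simps)
    then show False using nAC by simp
  qed
  have tBE: "tL B * uL B' - tL B' * uL B \<noteq> 0"
  proof
    assume "tL B * uL B' - tL B' * uL B = 0"
    then have "EE B B' = 0" unfolding EE_def by (simp add: algebra_simps)
    then show False using nBE by simp
  qed
  have Tnz: "TT A B A' B' \<noteq> 0" unfolding Tfac using Dl tAC tBE by simp
  have q1: "qgamma A B A' B' * uL l1 * uL l1 - 2 * qbeta A B A' B' * uL l1 * tL l1 + qalpha A B A' B' * tL l1 * tL l1 \<noteq> 0"
    using B1 unfolding qq_def by simp
  have q2: "qgamma A B A' B' * uL l2 * uL l2 - 2 * qbeta A B A' B' * uL l2 * tL l2 + qalpha A B A' B' * tL l2 * tL l2 \<noteq> 0"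
    using B2 unfolding qq_def by simp
  note FA = final_alg[OF char Dnz q1 q2 line_nz[OF lis2] Tnz[unfolded TT_def] Sxe Sye]
  show ?thesis
    unfolding anti cen mm prod.inject h4 Q_orthogonal_def qform_def fst_conv snd_conv rx_def ry_def qq_def
    using FA by simp
qed


end
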